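(* Let $E$ be a nonzero real Banach space, let $\widetilde K$ be a nonempty $w(E^*,E)$-compact convex subset of $E^*$, and let $\tau_{\widetilde K}(x)=\max_{x^*\in\widetilde K}\langle x,x^*\rangle$ for $x\in E$. Then for all $(y^*,y^{**})\in E^*\times E^{**}$: $(y^*,y^{**})\in G\big((\partial\tau_{\widetilde K})^{\mathbb F}\big)$ if and only if $y^*\in\widetilde K$ and $\langle y^*,y^{**}\rangle=\sup_{x^*\in\widetilde K}\langle x^*,y^{**}\rangle$.
   Context: $E^*$, $E^{**}$ are dual and bidual with their pairings. For proper convex lsc $f$ on $E$, $x^*\in\partial f(x)$ iff $f(x)+f^*(x^* )=\langle x,x^*\rangle$ ($f^*$ the Fenchel conjugate); $\partial\tau_{\widetilde K}$ is closed, monotone and quasidense. For a multifunction $S\colon E\rightrightarrows E^*$ with nonempty graph $G(S)$: closed means $G(S)$ norm-closed; monotone means $\langle s-t,s^*-t^*\rangle\ge0$ on $G(S)$; quasidense means for every $(x,x^* )$, $\inf_{(s,s^* )\in G(S)}[\tfrac12\|s-x\|^2+\tfrac12\|s^*-x^*\|^2+\langle s-x,s^*-x^*\rangle]\le0$. Let $\varphi_S(x,x^* )=\sup_{(s,s^* )\in G(S)}[\langle s,x^*\rangle+\langle x,s^*\rangle-\langle s,s^*\rangle]$, and $\varphi_S^*$ its conjugate on $E^*\times E^{**}$ under the pairing $\langle (x,x^* ),(y^*,y^{**})\rangle=\langle x,y^*\rangle+\langle x^*,y^{**}\rangle$. For $S$ closed, monotone, quasidense, the Fitzpatrick extension $S^{\mathbb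 F}\colon E^*\rightrightarrows E^{**}$ is given by $(y^*,y^{**})\in G(S^{\mathbb F})$ iff $\varphi_S^*(y^*,y^{**})=\langle y^*,y^{**}\rangle$. *)

theory Defs
  imports "HOL-Analysis.Analysis"
begin

text \<open>Dual space E^* is modelled as the type of bounded linear functionals
  'a \<Rightarrow>L real; the bidual E^** as ('a \<Rightarrow>L real) \<Rightarrow>L real.\<close>

definition weak_star_topology :: "('a::real_normed_vector \<Rightarrow>\<^sub>L real) topology" where
  "weak_star_topology =
     topology_generated_by {{f. blinfun_apply f x \<in> U} | x U. open U}"

definition support_fun :: "('a::real_normed_vector \<Rightarrow>\<^sub>L real) set \<Rightarrow> 'a \<Rightarrow> real" where
  "support_fun K x = Sup ((\<lambda>k. blinfun_apply k x) ` K)"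

definition subdiff :: "('a::real_normed_vector \<Rightarrow> real) \<Rightarrow> 'a \<Rightarrow> ('a \<Rightarrow>\<^sub>L real) set" where
  "subdiff f x = {xs. \<forall>y. f y \<ge> f x + blinfun_apply xs (y - x)}"

definition subdiff_graph :: "('a::real_normed_vector \<Rightarrow> real) \<Rightarrow> ('a \<times> ('a \<Rightarrow>\<^sub>L real)) set" where
  "subdiff_graph f = {(x, xs). xs \<in> subdiff f x}"

definition fitzpatrick :: "('a::real_normed_vector \<times> ('a \<Rightarrow>\<^sub>L real)) set
    \<Rightarrow> 'a \<Rightarrow> ('a \<Rightarrow>\<^sub>L real) \<Rightarrow> ereal" where
  "fitzpatrick G x xs =
     (SUP p\<in>G. ereal (blinfun_apply xs (fst p) + blinfun_apply (snd p) x
                       - blinfun_apply (snd p) (fst p)))"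

definition fitzpatrick_conj :: "('a::real_normed_vector \<times> ('a \<Rightarrow>\<^sub>L real)) set
    \<Rightarrow> ('a \<Rightarrow>\<^sub>L real) \<Rightarrow> (('a \<Rightarrow>\<^sub>L real) \<Rightarrow>\<^sub>L real) \<Rightarrow> ereal" where
  "fitzpatrick_conj G ys yss =
     (SUP p\<in>UNIV. ereal (blinfun_apply ys (fst p) + blinfun_apply yss (snd p))
                  - fitzpatrick G (fst p) (snd p))"

definition fitzpatrick_ext_graph :: "('a::real_normed_vector \<times> ('a \<Rightarrow>\<^sub>L real)) set
    \<Rightarrow> (('a \<Rightarrow>\<^sub>L real) \<times> (('a \<Rightarrow>\<^sub>L real) \<Rightarrow>\<^sub>L real)) set" where
  "fitzpatrick_ext_graph G =
     {(ys, yss). fitzpatrick_conj G ys yss = ereal (blinfun_apply yss ys)}"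

end

theory Submission
  imports Defs
begin

lemma ws_topspace [simp]: "topspace (weak_star_topology :: ('a::real_normed_vector \<Rightarrow>\<^sub>L real) topology) = UNIV"
  unfolding weak_star_topology_def topology_generated_by_topspace
  by (auto intro!: exI[of _ "UNIV"])

lemma eval_cont: "continuous_map (weak_star_topology :: ('a::real_normed_vector \<Rightarrow>\<^sub>L real) topology) euclideanreal (\<lambda>k. blinfun_apply k x)"
  unfolding continuous_map_def
proof (intro conjI allI impI)
  fix U :: "real set" assume "openin euclideanreal U"
  hence "open U" by simp
  hence "{f. blinfun_apply f x \<in> U} \<in> {{f. blinfun_apply f x \<in> U} | x U. open U}" by blast
  hence "openin weak_star_topology {f::'a \<Rightarrow>\<^sub>L real. blinfun_apply f x \<in> U}"
    unfolding weak_star_topology_def by (rule topology_generated_by_Basis)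
  thus "openin weak_star_topology {k \<in> topspace weak_star_topology. blinfun_apply k x \<in> U}" by simp
qed auto

lemma compact_eval:
  assumes "compactin weak_star_topology K"
  shows "compact ((\<lambda>k. blinfun_apply k x) ` K)"
  using image_compactin[OF assms eval_cont] by simp

lemma max_exists:
  assumes "compactin weak_star_topology K" "K \<noteq> {}"
  shows "\<exists>k0\<in>K. \<forall>k\<in>K. blinfun_apply k x \<le> blinfun_apply k0 x"
proof -
  have "compact ((\<lambda>k. blinfun_apply k x) ` K)" by (rule compact_eval[OF assms(1)])
  then obtain m where "m \<in> (\<lambda>k. blinfun_apply k x) ` K" "\<forall>y\<in>(\<lambda>k. blinfun_apply k x) ` K. y \<le> m"
    using compact_attains_sup assms(2) by (metis image_is_empty)
  thus ?thesis by auto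
qed

lemma min_exists:
  assumes "compactin weak_star_topology K" "K \<noteq> {}"
  shows "\<exists>k0\<in>K. \<forall>k\<in>K. blinfun_apply k x \<ge> blinfun_apply k0 x"
proof -
  have "compact ((\<lambda>k. blinfun_apply k x) ` K)" by (rule compact_eval[OF assms(1)])
  then obtain m where "m \<in> (\<lambda>k. blinfun_apply k x) ` K" "\<forall>y\<in>(\<lambda>k. blinfun_apply k x) ` K. m \<le> y"
    using compact_attains_inf assms(2) by (metis image_is_empty)
  thus ?thesis by auto
qed

lemma support_max:
  assumes "k0 \<in> K" "\<forall>k\<in>K. blinfun_apply k x \<le> blinfun_apply k0 x"
  shows "support_fun K x = blinfun_apply k0 x"
  unfolding support_fun_def using assms by (intro cSup_eq_maximum) auto

lemma support_ge:
  assumes "compactin weak_star_topology K" "k \<in> K"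
  shows "blinfun_apply k x \<le> support_fun K x"
proof -
  obtain k0 where "k0 \<in> K" "\<forall>k\<in>K. blinfun_apply k x \<le> blinfun_apply k0 x"
    using max_exists[OF assms(1)] assms(2) by blast
  thus ?thesis using support_max assms(2) by metis
qed

lemma support_attained:
  assumes "compactin weak_star_topology K" "K \<noteq> {}"
  shows "\<exists>k0\<in>K. support_fun K x = blinfun_apply k0 x"
  using max_exists[OF assms] support_max by metis

lemma blin_sum: "blinfun_apply k (\<Sum>x\<in>F. c x *\<^sub>R x) = (\<Sum>x\<in>F. c x * blinfun_apply k x)"
  by (simp add: blinfun.sum_right blinfun.scaleR_right)

lemma sep_finite:
  assumes cpt: "compactin weak_star_topology K" and ne: "K \<noteq> {}" and cvx: "convex K"
    and hyp: "\<forall>x. blinfun_apply y x \<le> support_fun K x" and fin: "finite F"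
  shows "\<exists>k\<in>K. \<forall>x\<in>F. blinfun_apply k x = blinfun_apply y x"
proof -
  define g where "g k = (\<Sum>x\<in>F. (blinfun_apply k x - blinfun_apply y x) * (blinfun_apply k x - blinfun_apply y x))" for k
  have gc: "continuous_map weak_star_topology euclideanreal g"
    unfolding g_def by (intro continuous_map_sum continuous_map_real_mult continuous_map_diff eval_cont continuous_map_const[THEN iffD2]) (auto simp: fin)
  have "compact (g ` K)" using image_compactin[OF cpt gc] by simp
  then obtain m where "m \<in> g ` K" "\<forall>v\<in>g ` K. m \<le> v"
    using compact_attains_inf ne by (metis image_is_empty)
  then obtain k0 where k0: "k0 \<in> K" "\<And>k. k \<in> K \<Longrightarrow> g k0 \<le> g k" by auto
  define d where "d x = blinfun_apply k0 x - blinfun_apply y x" for x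
  define z where "z = (\<Sum>x\<in>F. d x *\<^sub>R x)"
  have key: "blinfun_apply k0 z \<le> blinfun_apply k z" if kK: "k \<in> K" for k
  proof -
    define e where "e x = blinfun_apply k x - blinfun_apply k0 x" for x
    define a where "a = (\<Sum>x\<in>F. d x * e x)"
    define b where "b = (\<Sum>x\<in>F. e x * e x)"
    have b0: "b \<ge> 0" unfolding b_def by (intro sum_nonneg) auto
    have gk0: "g k0 = (\<Sum>x\<in>F. d x * d x)" unfolding g_def d_def by simp
    have ineq: "2 * a + t * b \<ge> 0" if t: "0 < t" "t \<le> 1" for t
    proof -
      define kt where "kt = (1 - t) *\<^sub>R k0 + t *\<^sub>R k"
      have "kt \<in> K" unfolding kt_def using cvx k0(1) kK t by (intro convexD) auto
      have kta: "blinfun_apply kt x = (1 - t) * blinfun_apply k0 x + t * blinfun_apply k x" for x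
        unfolding kt_def by (simp add: plus_blinfun.rep_eq scaleR_blinfun.rep_eq)
      have "g k0 \<le> g kt" using \<open>kt \<in> K\<close> by (rule k0(2))
      moreover have "g kt = (\<Sum>x\<in>F. (d x + t * e x) * (d x + t * e x))"
        unfolding g_def d_def e_def kta by (intro sum.cong) (auto simp: algebra_simps)
      moreover have "(\<Sum>x\<in>F. (d x + t * e x) * (d x + t * e x)) = g k0 + t * (2 * a + t * b)"
        unfolding gk0 a_def b_def
        by (simp add: sum.distrib sum_distrib_left algebra_simps power2_eq_square)
      ultimately have "t * (2 * a + t * b) \<ge> 0" by linarith
      thus ?thesis using t by (simp add: zero_le_mult_iff)
    qed
    have "a \<ge> 0"
    proof (rule ccontr)
      assume "\<not> a \<ge> 0"
      define t where "t = min 1 (- a / (b + 1))"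
      have t0: "0 < t" "t \<le> 1" unfolding t_def using \<open>\<not> a \<ge> 0\<close> b0 by (auto simp: divide_neg_pos)
      have "t * b \<le> (- a / (b + 1)) * b" unfolding t_def using b0 by (intro mult_right_mono) auto
      also have "\<dots> < - a" using \<open>\<not> a \<ge> 0\<close> b0 by (simp add: field_simps)
      finally have "2 * a + t * b < 0" using \<open>\<not> a \<ge> 0\<close> by linarith
      thus False using ineq[OF t0] by linarith
    qed
    moreover have "blinfun_apply k z - blinfun_apply k0 z = a"
      unfolding z_def blin_sum a_def e_def by (simp add: sum_subtractf algebra_simps)
    ultimately show ?thesis by linarith
  qed
  have "support_fun K (- z) = blinfun_apply k0 (- z)"
    using k0(1) key by (intro support_max) (auto simp: blinfun.minus_right)
  with hyp have "blinfun_apply y (- z) \<le> blinfun_apply k0 (- z)" by metis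
  hence "blinfun_apply k0 z - blinfun_apply y z \<le> 0" by (simp add: blinfun.minus_right)
  have "blinfun_apply k0 z - blinfun_apply y z = (\<Sum>x\<in>F. d x * blinfun_apply k0 x - d x * blinfun_apply y x)"
    unfolding z_def blin_sum by (simp add: sum_subtractf)
  also have "\<dots> = (\<Sum>x\<in>F. d x * d x)"
    by (intro sum.cong) (auto simp: d_def algebra_simps)
  finally have "(\<Sum>x\<in>F. d x * d x) \<le> 0" using \<open>blinfun_apply k0 z - blinfun_apply y z \<le> 0\<close> by linarith
  moreover have "(\<Sum>x\<in>F. d x * d x) \<ge> 0" by (intro sum_nonneg) auto
  ultimately have "(\<Sum>x\<in>F. d x * d x) = 0" by linarith
  hence "\<forall>x\<in>F. d x * d x = 0" using fin by (subst (asm) sum_nonneg_eq_0_iff) auto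
  thus ?thesis using k0(1) unfolding d_def by auto
qed

lemma sep:
  assumes cpt: "compactin weak_star_topology K" and ne: "K \<noteq> {}" and cvx: "convex K"
    and hyp: "\<forall>x. blinfun_apply y x \<le> support_fun K x"
  shows "y \<in> K"
proof -
  define A where "A x = {k. blinfun_apply k x = blinfun_apply y x}" for x :: 'a
  have cl: "closedin weak_star_topology (A x)" for x
    using closedin_continuous_map_preimage[OF eval_cont[of x], of "{blinfun_apply y x}"]
    unfolding A_def by simp
  have fip: "K \<inter> \<Inter>\<F> \<noteq> {}" if fF: "finite \<F>" "\<F> \<subseteq> range A" for \<F>
  proof -
    obtain F where F: "finite F" "\<F> = A ` F" using finite_subset_image[OF fF(1) fF(2)] by blast
    obtain k where "k \<in> K" "\<forall>x\<in>F. blinfun_apply k x = blinfun_apply y x"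
      using sep_finite[OF cpt ne cvx hyp F(1)] by blast
    thus ?thesis unfolding F(2) A_def by blast
  qed
  have "K \<inter> \<Inter>(range A) \<noteq> {}"
    using cpt[unfolded compactin_fip] cl fip by blast
  then obtain k where "k \<in> K" "\<forall>x. blinfun_apply k x = blinfun_apply y x" unfolding A_def by blast
  moreover have "k = y" using calculation(2) by (intro blinfun_eqI) auto
  ultimately show ?thesis by simp
qed

context
  fixes K :: "('a::banach \<Rightarrow>\<^sub>L real) set"
  assumes cpt: "compactin weak_star_topology K" and ne: "K \<noteq> {}" and cvx: "convex K"
begin

lemma T0: "support_fun K 0 = 0"
proof -
  obtain k where "k \<in> K" using ne by blast
  thus ?thesis using support_max[of k K 0] by simp
qed

lemma Tscale: assumes "t \<ge> 0" shows "support_fun K (t *\<^sub>R x) = t * support_fun K x"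
proof -
  obtain k0 where k0: "k0 \<in> K" "\<forall>k\<in>K. blinfun_apply k x \<le> blinfun_apply k0 x"
    using max_exists[OF cpt ne] by blast
  have "support_fun K (t *\<^sub>R x) = blinfun_apply k0 (t *\<^sub>R x)"
    using k0 assms by (intro support_max) (auto simp: blinfun.scaleR_right mult_left_mono)
  thus ?thesis using support_max[OF k0] by (simp add: blinfun.scaleR_right)
qed

lemma inG: assumes "k \<in> K" "blinfun_apply k s = support_fun K s"
  shows "(s, k) \<in> subdiff_graph (support_fun K)"
  unfolding subdiff_graph_def subdiff_def
  using assms support_ge[OF cpt assms(1)] by (auto simp: blinfun.diff_right)

lemma Gchar: assumes "(s, k) \<in> subdiff_graph (support_fun K)"
  shows "k \<in> K" "blinfun_apply k s = support_fun K s"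
proof -
  have h: "\<And>y. support_fun K y \<ge> support_fun K s + blinfun_apply k (y - s)"
    using assms unfolding subdiff_graph_def subdiff_def by auto
  have a: "0 \<ge> support_fun K s - blinfun_apply k s" using h[of 0] T0 by (simp add: blinfun.diff_right blinfun.minus_right)
  have "support_fun K (2 *\<^sub>R s) \<ge> support_fun K s + blinfun_apply k s"
    using h[of "2 *\<^sub>R s"] by (simp add: blinfun.diff_right blinfun.scaleR_right)
  hence b: "support_fun K s \<ge> blinfun_apply k s" using Tscale[of 2 s] by simp
  show eq: "blinfun_apply k s = support_fun K s" using a b by linarith
  have "\<forall>y. blinfun_apply k y \<le> support_fun K y"
    using h eq by (auto simp: blinfun.diff_right)
  thus "k \<in> K" by (rule sep[OF cpt ne cvx])
qed

lemma phiK: assumes "xs \<in> K"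
  shows "fitzpatrick (subdiff_graph (support_fun K)) x xs = ereal (support_fun K x)"
  unfolding fitzpatrick_def
proof (rule antisym)
  show "(SUP p\<in>subdiff_graph (support_fun K). ereal (blinfun_apply xs (fst p) + blinfun_apply (snd p) x - blinfun_apply (snd p) (fst p))) \<le> ereal (support_fun K x)"
  proof (rule SUP_least)
    fix p assume "p \<in> subdiff_graph (support_fun K)"
    moreover obtain s k where p: "p = (s, k)" by (cases p)
    ultimately have G: "(s, k) \<in> subdiff_graph (support_fun K)" by simp
    have "blinfun_apply xs s \<le> support_fun K s" using support_ge[OF cpt assms] .
    moreover have "blinfun_apply k x \<le> support_fun K x" using support_ge[OF cpt Gchar(1)[OF G]] .
    ultimately show "ereal (blinfun_apply xs (fst p) + blinfun_apply (snd p) x - blinfun_apply (snd p) (fst p)) \<le> ereal (support_fun K x)"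
      using Gchar(2)[OF G] p by simp
  qed
next
  obtain k0 where k0: "k0 \<in> K" "support_fun K x = blinfun_apply k0 x"
    using support_attained[OF cpt ne] by blast
  have "(0, k0) \<in> subdiff_graph (support_fun K)" using inG[OF k0(1)] T0 by simp
  hence "ereal (blinfun_apply xs (fst (0,k0)) + blinfun_apply (snd (0,k0)) x - blinfun_apply (snd (0,k0)) (fst (0,k0))) \<le> (SUP p\<in>subdiff_graph (support_fun K). ereal (blinfun_apply xs (fst p) + blinfun_apply (snd p) x - blinfun_apply (snd p) (fst p)))"
    by (intro SUP_upper2[OF \<open>(0, k0) \<in> subdiff_graph (support_fun K)\<close>]) simp
  thus "ereal (support_fun K x) \<le> (SUP p\<in>subdiff_graph (support_fun K). ereal (blinfun_apply xs (fst p) + blinfun_apply (snd p) x - blinfun_apply (snd p) (fst p)))"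
    using k0 by simp
qed

lemma phinotK: assumes "xs \<notin> K"
  shows "fitzpatrick (subdiff_graph (support_fun K)) x xs = \<infinity>"
proof -
  obtain s where s: "blinfun_apply xs s > support_fun K s"
    using sep[OF cpt ne cvx, of xs] assms by (meson not_le)
  obtain m where m: "\<forall>k\<in>K. m \<le> blinfun_apply k x"
    using min_exists[OF cpt ne, of x] by blast
  define \<delta> where "\<delta> = blinfun_apply xs s - support_fun K s"
  have d0: "\<delta> > 0" using s \<delta>_def by simp
  have bnd: "ereal (t * \<delta> + m) \<le> fitzpatrick (subdiff_graph (support_fun K)) x xs" if t: "t \<ge> 0" for t
  proof -
    obtain kt where kt: "kt \<in> K" "support_fun K (t *\<^sub>R s) = blinfun_apply kt (t *\<^sub>R s)"
      using support_attained[OF cpt ne] by blast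
    have G: "(t *\<^sub>R s, kt) \<in> subdiff_graph (support_fun K)" using inG[OF kt(1)] kt(2) by simp
    have "ereal (blinfun_apply xs (fst (t *\<^sub>R s, kt)) + blinfun_apply (snd (t *\<^sub>R s, kt)) x - blinfun_apply (snd (t *\<^sub>R s, kt)) (fst (t *\<^sub>R s, kt))) \<le> fitzpatrick (subdiff_graph (support_fun K)) x xs"
      unfolding fitzpatrick_def using G by (rule SUP_upper)
    note up = this
    have h1: "blinfun_apply kt (t *\<^sub>R s) = t * support_fun K s"
      using kt(2) Tscale[OF t, of s] by simp
    have h2: "blinfun_apply xs (t *\<^sub>R s) = t * blinfun_apply xs s" by (simp add: blinfun.scaleR_right)
    have eq: "blinfun_apply xs (t *\<^sub>R s) + blinfun_apply kt x - blinfun_apply kt (t *\<^sub>R s) = t * \<delta> + blinfun_apply kt x"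
      unfolding h1 h2 \<delta>_def by (simp add: algebra_simps)
    have "m \<le> blinfun_apply kt x" using m kt(1) by blast
    hence "ereal (t * \<delta> + m) \<le> ereal (blinfun_apply xs (t *\<^sub>R s) + blinfun_apply kt x - blinfun_apply kt (t *\<^sub>R s))"
      unfolding eq by simp
    also have "\<dots> \<le> fitzpatrick (subdiff_graph (support_fun K)) x xs" using up by simp
    finally show ?thesis .
  qed
  show ?thesis
  proof (rule ereal_top)
    fix r :: real
    define t where "t = (\<bar>r\<bar> + \<bar>m\<bar>) / \<delta>"
    have t0: "t \<ge> 0" using d0 unfolding t_def by simp
    have "t * \<delta> = \<bar>r\<bar> + \<bar>m\<bar>" using d0 unfolding t_def by simp
    hence "r \<le> t * \<delta> + m" by linarith
    hence "ereal r \<le> ereal (t * \<delta> + m)" by simp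
    thus "ereal r \<le> fitzpatrick (subdiff_graph (support_fun K)) x xs" using bnd[OF t0] by (rule order_trans)
  qed
qed

end

theorem theorem3p8:
  fixes K :: "('a::banach \<Rightarrow>\<^sub>L real) set"
    and ys :: "'a \<Rightarrow>\<^sub>L real"
    and yss :: "('a \<Rightarrow>\<^sub>L real) \<Rightarrow>\<^sub>L real"
  assumes "\<exists>x::'a. x \<noteq> 0"
    and "K \<noteq> {}"
    and "compactin weak_star_topology K"
    and "convex K"
  shows "(ys, yss) \<in> fitzpatrick_ext_graph (subdiff_graph (support_fun K))
     \<longleftrightarrow> ys \<in> K \<and> ereal (blinfun_apply yss ys) = (SUP xs\<in>K. ereal (blinfun_apply yss xs))"
proof -
  note cpt = assms(3) and ne = assms(2) and cvx = assms(4)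
  define G where "G = subdiff_graph (support_fun K)"
  define v where "v p = ereal (blinfun_apply ys (fst p) + blinfun_apply yss (snd p)) - fitzpatrick G (fst p) (snd p)" for p
  have C: "fitzpatrick_conj G ys yss = (SUP p\<in>UNIV. v p)"
    unfolding fitzpatrick_conj_def v_def by simp
  show ?thesis
  proof (cases "ys \<in> K")
    case True
    have "(SUP p\<in>UNIV. v p) = (SUP xs\<in>K. ereal (blinfun_apply yss xs))"
    proof (rule antisym)
      show "(SUP p\<in>UNIV. v p) \<le> (SUP xs\<in>K. ereal (blinfun_apply yss xs))"
      proof (rule SUP_least)
        fix p :: "'a \<times> ('a \<Rightarrow>\<^sub>L real)"
        obtain x xs where p: "p = (x, xs)" by (cases p)
        show "v p \<le> (SUP xs\<in>K. ereal (blinfun_apply yss xs))"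
        proof (cases "xs \<in> K")
          case True
          have "v p = ereal (blinfun_apply ys x + blinfun_apply yss xs - support_fun K x)"
            unfolding v_def G_def p using phiK[OF cpt ne cvx True] by simp
          also have "\<dots> \<le> ereal (blinfun_apply yss xs)"
            using support_ge[OF cpt \<open>ys \<in> K\<close>, of x] by simp
          also have "\<dots> \<le> (SUP xs\<in>K. ereal (blinfun_apply yss xs))"
            using True by (rule SUP_upper)
          finally show ?thesis .
        next
          case False
          have "v p = - \<infinity>"
            unfolding v_def G_def p using phinotK[OF cpt ne cvx False] by simp
          thus ?thesis by simp
        qed
      qed
    next
      show "(SUP xs\<in>K. ereal (blinfun_apply yss xs)) \<le> (SUP p\<in>UNIV. v p)"
      proof (rule SUP_least)
        fix xs assume xs: "xs \<in> K"
        have "v (0, xs) = ereal (blinfun_apply yss xs)"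
          unfolding v_def G_def using phiK[OF cpt ne cvx xs] T0[OF cpt ne cvx] by simp
        thus "ereal (blinfun_apply yss xs) \<le> (SUP p\<in>UNIV. v p)"
          by (metis SUP_upper UNIV_I)
      qed
    qed
    thus ?thesis using True C unfolding fitzpatrick_ext_graph_def G_def by auto
  next
    case False
    obtain x0 where x0: "blinfun_apply ys x0 > support_fun K x0"
      using sep[OF cpt ne cvx, of ys] False by (meson not_le)
    obtain k where k: "k \<in> K" using ne by blast
    define \<delta> where "\<delta> = blinfun_apply ys x0 - support_fun K x0"
    define c where "c = blinfun_apply yss k"
    have d0: "\<delta> > 0" using x0 \<delta>_def by simp
    have bnd: "ereal (t * \<delta> + c) \<le> (SUP p\<in>UNIV. v p)" if t: "t \<ge> 0" for t
    proof -
      have "v (t *\<^sub>R x0, k) = ereal (t * blinfun_apply ys x0 + c - t * support_fun K x0)"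
        unfolding v_def G_def c_def using phiK[OF cpt ne cvx k] Tscale[OF cpt ne cvx t, of x0]
        by (simp add: blinfun.scaleR_right)
      also have "\<dots> = ereal (t * \<delta> + c)" unfolding \<delta>_def by (simp add: algebra_simps)
      finally show ?thesis by (metis SUP_upper UNIV_I)
    qed
    have inf: "(SUP p\<in>UNIV. v p) = \<infinity>"
    proof (rule ereal_top)
      fix r :: real
      define t where "t = (\<bar>r\<bar> + \<bar>c\<bar>) / \<delta>"
      have t0: "t \<ge> 0" using d0 unfolding t_def by simp
      have "t * \<delta> = \<bar>r\<bar> + \<bar>c\<bar>" using d0 unfolding t_def by simp
      hence "r \<le> t * \<delta> + c" by linarith
      hence "ereal r \<le> ereal (t * \<delta> + c)" by simp
      thus "ereal r \<le> (SUP p\<in>UNIV. v p)" using bnd[OF t0] by (rule order_trans)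
    qed
    show ?thesis using False C inf unfolding fitzpatrick_ext_graph_def G_def by auto
  qed
qed

end
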